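(* Let $n$ be odd and squarefree, with every prime divisor of $n$ at least $7$ and $\Omega(n)\neq 2$. Let $p'$ be a prime divisor of $n$ and $A=L(n;p')$. Then $D_A(n)=\Omega(n)+1$.
   Context: $\mathbb{Z}_n$ is the integers mod $n$, $U(n)$ its unit group. For nonempty $A\subseteq\mathbb{Z}_n\setminus\{0\}$, a sequence $(x_1,\ldots,x_k)$ is an $A$-weighted zero-sum sequence if $\sum a_ix_i=0$ for some $a_i\in A$; $D_A(n)$ is the least $k$ such that every length-$k$ sequence in $\mathbb{Z}_n$ has a nonempty $A$-weighted zero-sum subsequence. $\Omega(n)$ is the number of prime factors with multiplicity. For odd $n=\prod p_i^{r_i}$, a prime $p\mid n$ and $a\in U(n)$, $\left(\frac{a}{p}\right)$ is the Legendre symbol of the image of $a$ in $\mathbb{Z}_p$ and $\left(\frac{a}{n}\right)=\prod\left(\frac{a}{p_i}\right)^{r_i}$ is the Jacobi symbol. For a prime divisor $p'$ of $n$, $L(n;p')=\{a\in U(n): \left(\frac{a}{n}\right)=\left(\frac{a}{p'}\right)\}$. *)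

theory Defs
  imports "HOL-Number_Theory.Number_Theory" "HOL-Computational_Algebra.Squarefree"
begin

text \<open>Elements of Z_n are represented by integers in {0..<n}; equality in Z_n is congruence mod n.\<close>

definition Zn :: "nat \<Rightarrow> int set" where
  "Zn n = {0..<int n}"

definition units_mod :: "nat \<Rightarrow> int set" where
  "units_mod n = {a \<in> Zn n. coprime a (int n)}"

definition bigOmega :: "nat \<Rightarrow> nat" where
  "bigOmega n = size (prime_factorization n)"

definition Jacobi :: "int \<Rightarrow> nat \<Rightarrow> int" where
  "Jacobi a n = (\<Prod>p\<in>prime_factors n. Legendre a (int p) ^ multiplicity p n)"

definition Lset :: "nat \<Rightarrow> nat \<Rightarrow> int set" where
  "Lset n p' = {a \<in> units_mod n. Jacobi a n = Legendre a (int p')}"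

definition has_A_zero_sum_subseq :: "nat \<Rightarrow> int set \<Rightarrow> nat \<Rightarrow> (nat \<Rightarrow> int) \<Rightarrow> bool" where
  "has_A_zero_sum_subseq n A k x \<longleftrightarrow>
     (\<exists>I a. I \<subseteq> {..<k} \<and> I \<noteq> {} \<and> (\<forall>i\<in>I. a i \<in> A) \<and>
            [(\<Sum>i\<in>I. a i * x i) = 0] (mod int n))"

definition DA :: "int set \<Rightarrow> nat \<Rightarrow> nat" where
  "DA A n = (LEAST k. \<forall>x. (\<forall>i<k. x i \<in> Zn n) \<longrightarrow> has_A_zero_sum_subseq n A k x)"

end

theory Submission
  imports Defs
begin

lemma Leg_vals: "Legendre a p \<in> {-1,0,1}"
  by (auto simp: Legendre_def)

lemma Leg_cong: assumes "[a = b] (mod p)" shows "Legendre a p = Legendre b p"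
proof -
  have 1: "[a = 0] (mod p) \<longleftrightarrow> [b = 0] (mod p)" using assms cong_sym cong_trans by blast
  have 2: "QuadRes p a \<longleftrightarrow> QuadRes p b" unfolding QuadRes_def using assms cong_sym cong_trans by blast
  show ?thesis unfolding Legendre_def using 1 2 by simp
qed

lemma Leg_mod: "Legendre (a mod p) p = Legendre a p"
  by (rule Leg_cong) (simp add: cong_def)

lemma Leg_zero_iff: "Legendre a p = 0 \<longleftrightarrow> p dvd a"
  by (auto simp: Legendre_def cong_0_iff)

lemma Leg_mult:
  assumes "prime p" "2 < p"
  shows "Legendre (a*b) (int p) = Legendre a (int p) * Legendre b (int p)"
proof -
  let ?h = "(p - 1) div 2"
  have c1: "[Legendre (a*b) (int p) = a ^ ?h * b ^ ?h] (mod int p)"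
    using euler_criterion[OF assms, of "a*b"] by (simp add: power_mult_distrib)
  have c2: "[Legendre a (int p) = a ^ ?h] (mod int p)"
    using euler_criterion assms by blast
  have c3: "[Legendre b (int p) = b ^ ?h] (mod int p)"
    using euler_criterion assms by blast
  have c23: "[Legendre a (int p) * Legendre b (int p) = a ^ ?h * b ^ ?h] (mod int p)"
    using c2 c3 by (rule cong_mult)
  have c: "[Legendre (a*b) (int p) = Legendre a (int p) * Legendre b (int p)] (mod int p)"
    using cong_trans[OF c1 cong_sym[OF c23]] .
  define d where "d = Legendre (a*b) (int p) - Legendre a (int p) * Legendre b (int p)"
  have dv: "int p dvd d"
    using c by (simp add: cong_iff_dvd_diff d_def)
  have ab: "\<bar>d\<bar> \<le> 2"
    using Leg_vals[of "a*b" "int p"] Leg_vals[of a "int p"] Leg_vals[of b "int p"] unfolding d_def by auto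
  have "d = 0"
  proof (rule ccontr)
    assume "d \<noteq> 0"
    hence "\<bar>int p\<bar> \<le> \<bar>d\<bar>" using dv dvd_imp_le_int by blast
    thus False using ab assms(2) by simp
  qed
  thus ?thesis unfolding d_def by simp
qed

lemma Leg_one[simp]: "p > 1 \<Longrightarrow> Legendre 1 p = 1"
  unfolding Legendre_def QuadRes_def
  by (auto simp: cong_def intro!: exI[of _ 1])

lemma Leg_nqr_exists:
  assumes "prime p" "2 < p"
  shows "\<exists>g. Legendre g (int p) = -1"
proof -
  obtain x where x: "residue_primroot p x" using prime_primitive_root_exists assms(1) prime_gt_1_nat by blast
  hence cop: "coprime p x" and ordx: "ord p x = totient p" by (auto simp: residue_primroot_def)
  have ordx': "ord p x = p - 1" using ordx assms(1) by (simp add: totient_prime)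
  have nz: "Legendre (int x) (int p) \<noteq> 0"
  proof
    assume "Legendre (int x) (int p) = 0"
    hence "int p dvd int x" by (simp add: Leg_zero_iff)
    hence "p dvd x" by simp
    thus False using cop coprime_absorb_left[OF \<open>p dvd x\<close>] assms(1) by simp
  qed
  have n1: "Legendre (int x) (int p) \<noteq> 1"
  proof
    assume a: "Legendre (int x) (int p) = 1"
    have "[1 = int x ^ ((p - 1) div 2)] (mod int p)"
      using euler_criterion[OF assms, of "int x"] a by simp
    hence "[int (x ^ ((p - 1) div 2)) = int 1] (mod int p)"
      using cong_sym by simp
    hence "[x ^ ((p - 1) div 2) = 1] (mod p)"
      using cong_int_iff by blast
    hence "ord p x dvd (p - 1) div 2" using ord_divides by blast
    moreover have "(p - 1) div 2 > 0" using assms by auto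
    ultimately have "p - 1 \<le> (p - 1) div 2" using ordx' dvd_imp_le by simp
    thus False using assms by auto
  qed
  show ?thesis using nz n1 Leg_vals[of "int x" "int p"] by auto
qed


lemma Leg_0[simp]: "Legendre 0 p = 0" by (simp add: Legendre_def)

lemma Leg_pm1: "\<not> p dvd a \<Longrightarrow> Legendre a p \<in> {-1,1}"
  using Leg_vals[of a p] Leg_zero_iff[of a p] by auto

lemma Leg_sq:
  assumes "prime p" "2 < p" "\<not> int p dvd a"
  shows "Legendre a (int p) * Legendre a (int p) = 1"
  using Leg_pm1[OF assms(3)] by auto

lemma cop_of_ndvd:
  assumes "prime p" "\<not> int p dvd a"
  shows "coprime a (int p)"
  using prime_imp_coprime[of "int p" a] assms by (simp add: coprime_commute)

lemma Leg_T0: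
  assumes "prime p" "2 < p"
  shows "(\<Sum>u\<in>{1..<int p}. Legendre u (int p)) = 0"
proof -
  obtain g where g: "Legendre g (int p) = -1" using Leg_nqr_exists[OF assms] by blast
  have "\<not> int p dvd g" using g Leg_zero_iff[of g "int p"] by auto
  hence cop: "coprime g (int p)" using cop_of_ndvd assms by blast
  have bij: "bij_betw (\<lambda>m. g * m mod int p) {1..<int p} {1..<int p}"
    using bij_betw_int_remainders_mult[OF cop] .
  have "(\<Sum>u\<in>{1..<int p}. Legendre (g * u mod int p) (int p)) = (\<Sum>u\<in>{1..<int p}. Legendre u (int p))"
    using sum.reindex_bij_betw[OF bij, of "\<lambda>u. Legendre u (int p)"] by simp
  moreover have "(\<Sum>u\<in>{1..<int p}. Legendre (g * u mod int p) (int p)) = - (\<Sum>u\<in>{1..<int p}. Legendre u (int p))"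
    by (simp add: Leg_mod Leg_mult[OF assms] g sum_negf)
  ultimately show ?thesis by simp
qed

lemma Leg_T0':
  assumes "prime p" "2 < p"
  shows "(\<Sum>u\<in>{0..<int p}. Legendre u (int p)) = 0"
proof -
  have "{0..<int p} = insert 0 {1..<int p}" using assms by auto
  thus ?thesis using Leg_T0[OF assms] by (simp add: Leg_zero_iff)
qed

lemma Leg_A:
  assumes "prime p" "2 < p"
  shows "(\<Sum>u\<in>{2..<int p}. Legendre u (int p)) = -1"
proof -
  have "{1..<int p} = insert 1 {2..<int p}" using assms by auto
  thus ?thesis using Leg_T0[OF assms] assms by simp
qed

lemma Leg_B:
  assumes "prime p" "2 < p"
  shows "(\<Sum>u\<in>{2..<int p}. Legendre (1 - u) (int p)) = -1"
proof -
  have "(\<Sum>u\<in>{2..<int p}. Legendre (1 - u) (int p)) = (\<Sum>u\<in>{2..<int p}. Legendre (int p + 1 - u) (int p))"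
  proof (rule sum.cong[OF refl])
    fix u show "Legendre (1 - u) (int p) = Legendre (int p + 1 - u) (int p)"
      by (rule Leg_cong) (simp add: cong_iff_dvd_diff)
  qed
  also have "\<dots> = (\<Sum>u\<in>{2..<int p}. Legendre u (int p))"
    by (rule sum.reindex_bij_witness[of _ "\<lambda>u. int p + 1 - u" "\<lambda>u. int p + 1 - u"]) auto
  finally show ?thesis using Leg_A[OF assms] by simp
qed

lemma Leg_C:
  assumes "prime p" "2 < p"
  shows "(\<Sum>u\<in>{1..<int p}. Legendre (u * (1 - u)) (int p)) = - Legendre (-1) (int p)"
proof -
  let ?P = "int p"
  let ?inv = "\<lambda>u. modular_inverse ?P u"
  have pos: "?P > 1" using assms by simp
  have cop: "coprime u ?P" if "u \<in> {1..<?P}" for u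
  proof -
    have "\<not> ?P dvd u" using that zdvd_not_zless by auto
    thus ?thesis using cop_of_ndvd assms by blast
  qed
  have invin: "?inv u \<in> {1..<?P}" if "u \<in> {1..<?P}" for u
  proof -
    have "coprime (?inv u) ?P" using coprime_modular_inverse[OF cop[OF that]] .
    moreover have "?inv u \<ge> 0" "?inv u < ?P" using pos modular_inverse_int_nonneg modular_inverse_int_less by auto
    ultimately show ?thesis using pos by (cases "?inv u = 0") auto
  qed
  have invinv: "?inv (?inv u) = u" if "u \<in> {1..<?P}" for u
  proof (rule modular_inverse_int_eqI)
    show "u \<in> {0..<?P}" using that by auto
    show "[?inv u * u = 1] (mod ?P)" using cong_modular_inverse2[OF cop[OF that]] .
  qed
  have fs: "?inv \<in> {1..<?P} \<rightarrow> {1..<?P}" using invin by blast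
  have bij: "bij_betw ?inv {1..<?P} {1..<?P}"
    using bij_betwI[OF fs fs] invinv by blast
  have step: "Legendre (u * (1 - u)) ?P = Legendre (?inv u - 1) ?P" if "u \<in> {1..<?P}" for u
  proof -
    have c1: "[u * ?inv u = 1] (mod ?P)" using cong_modular_inverse1[OF cop[OF that]] .
    have "[u * (u * ?inv u) - u * u = u * 1 - u * u] (mod ?P)"
      using c1 by (intro cong_diff cong_mult cong_refl)
    hence "[u * u * (?inv u - 1) = u * (1 - u)] (mod ?P)" by (simp add: algebra_simps)
    hence "Legendre (u * (1 - u)) ?P = Legendre (u * u * (?inv u - 1)) ?P"
      using Leg_cong cong_sym by metis
    also have "\<dots> = (Legendre u ?P * Legendre u ?P) * Legendre (?inv u - 1) ?P"
      using Leg_mult[OF assms] by simp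
    also have "Legendre u ?P * Legendre u ?P = 1"
      using Leg_sq[OF assms] that zdvd_not_zless by auto
    finally show ?thesis by simp
  qed
  have "(\<Sum>u\<in>{1..<?P}. Legendre (u * (1 - u)) ?P) = (\<Sum>u\<in>{1..<?P}. Legendre (?inv u - 1) ?P)"
    using step by (rule sum.cong[OF refl])
  also have "\<dots> = (\<Sum>v\<in>{1..<?P}. Legendre (v - 1) ?P)"
    using sum.reindex_bij_betw[OF bij, of "\<lambda>v. Legendre (v - 1) ?P"] .
  also have "\<dots> = (\<Sum>t\<in>{0..<?P - 1}. Legendre t ?P)"
    by (rule sum.reindex_bij_witness[of _ "\<lambda>t. t + 1" "\<lambda>v. v - 1"]) auto
  also have "\<dots> = - Legendre (-1) ?P"
  proof -
    have e: "{0..<?P} = insert (?P - 1) {0..<?P - 1}" using pos by auto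
    have "(\<Sum>t\<in>{0..<?P}. Legendre t ?P) = Legendre (?P - 1) ?P + (\<Sum>t\<in>{0..<?P - 1}. Legendre t ?P)"
      unfolding e by simp
    moreover have "Legendre (?P - 1) ?P = Legendre (-1) ?P"
      by (rule Leg_cong) (simp add: cong_def)
    ultimately show ?thesis using Leg_T0'[OF assms] by simp
  qed
  finally show ?thesis .
qed

lemma Leg_P0:
  assumes "prime p" "7 \<le> p" "e1 \<in> {-1,1}" "e2 \<in> {-1,1}"
  shows "\<exists>u. Legendre u (int p) = e1 \<and> Legendre (1 - u) (int p) = e2"
proof (rule ccontr)
  assume na: "\<not> ?thesis"
  let ?P = "int p"
  let ?c = "\<lambda>u. Legendre u ?P"
  have p2: "2 < p" using assms by simp
  have nd1: "\<not> ?P dvd u" if "u \<in> {2..<?P}" for u using that zdvd_not_zless by auto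
  have nd2: "\<not> ?P dvd (1 - u)" if "u \<in> {2..<?P}" for u
  proof
    assume "?P dvd (1 - u)"
    hence "?P dvd (u - 1)" by (metis dvd_minus_iff minus_diff_eq)
    thus False using that zdvd_not_zless[of "u - 1" ?P] by auto
  qed
  have z: "(1 + e1 * ?c u) * (1 + e2 * ?c (1 - u)) = 0" if "u \<in> {2..<?P}" for u
  proof -
    have "?c u \<in> {-1,1}" "?c (1-u) \<in> {-1,1}" using Leg_pm1 nd1[OF that] nd2[OF that] by auto
    thus ?thesis using na assms(3,4) by auto
  qed
  have "(\<Sum>u\<in>{2..<?P}. (1 + e1 * ?c u) * (1 + e2 * ?c (1 - u))) = 0"
    using z by (intro sum.neutral) blast
  moreover have "(\<Sum>u\<in>{2..<?P}. (1 + e1 * ?c u) * (1 + e2 * ?c (1 - u)))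
      = (\<Sum>u\<in>{2..<?P}. 1) + e1 * (\<Sum>u\<in>{2..<?P}. ?c u) + e2 * (\<Sum>u\<in>{2..<?P}. ?c (1 - u))
        + e1 * e2 * (\<Sum>u\<in>{2..<?P}. ?c u * ?c (1 - u))"
    by (simp add: algebra_simps sum.distrib sum_distrib_left)
  moreover have "(\<Sum>u\<in>{2..<?P}. ?c u * ?c (1 - u)) = - ?c (-1)"
  proof -
    have "{1..<?P} = insert 1 {2..<?P}" using assms by auto
    hence "(\<Sum>u\<in>{2..<?P}. ?c (u * (1 - u))) = - ?c (-1)"
      using Leg_C[OF assms(1) p2] by (simp add: Leg_zero_iff)
    thus ?thesis by (simp add: Leg_mult[OF assms(1) p2, symmetric])
  qed
  moreover have "(\<Sum>u\<in>{2..<?P}. (1::int)) = ?P - 2" using assms by simp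
  ultimately have "0 = ?P - 2 - e1 - e2 - e1 * e2 * ?c (-1)"
    using Leg_A[OF assms(1) p2] Leg_B[OF assms(1) p2] by simp
  moreover have "?c (-1) \<in> {-1,1}" using Leg_pm1[of ?P "-1"] assms by simp
  ultimately show False using assms by auto
qed


lemma Leg_realize:
  assumes "prime p" "2 < p" "e \<in> {-1,1}"
  shows "\<exists>r. Legendre r (int p) = e"
proof (cases "e = 1")
  case True
  have "Legendre 1 (int p) = 1" using assms(2) by simp
  thus ?thesis using True by blast
next
  case False
  thus ?thesis using assms Leg_nqr_exists[OF assms(1,2)] by auto
qed

lemma Leg_inv:
  assumes "prime p" "2 < p" "\<not> int p dvd y"
  shows "Legendre (modular_inverse (int p) y) (int p) = Legendre y (int p)"
proof -
  have cop: "coprime y (int p)" using cop_of_ndvd assms by blast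
  have "[modular_inverse (int p) y * y = 1] (mod int p)" using cong_modular_inverse2[OF cop] .
  hence "Legendre (modular_inverse (int p) y * y) (int p) = Legendre 1 (int p)" by (rule Leg_cong)
  hence "Legendre (modular_inverse (int p) y) (int p) * Legendre y (int p) = 1"
    using Leg_mult[OF assms(1,2)] assms(2) by simp
  moreover have "Legendre y (int p) \<in> {-1,1}" using Leg_pm1 assms(3) by blast
  ultimately show ?thesis by auto
qed

lemma Leg_two:
  assumes "prime p" "7 \<le> p" "\<not> int p dvd c" "\<not> int p dvd y1" "\<not> int p dvd y2"
    "e1 \<in> {-1,1}" "e2 \<in> {-1,1}"
  shows "\<exists>w1 w2. Legendre w1 (int p) = e1 \<and> Legendre w2 (int p) = e2 \<and>
           [w1 * y1 + w2 * y2 = c] (mod int p)"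
proof -
  let ?P = "int p"
  let ?c = "\<lambda>u. Legendre u ?P"
  have p2: "2 < p" using assms by simp
  note LM = Leg_mult[OF assms(1) p2]
  have cc: "?c c \<in> {-1,1}" "?c y1 \<in> {-1,1}" "?c y2 \<in> {-1,1}" using Leg_pm1 assms by blast+
  have f1: "e1 * ?c c * ?c y1 \<in> {-1,1}" and f2: "e2 * ?c c * ?c y2 \<in> {-1,1}"
    using cc assms(6,7) by auto
  obtain u where u: "?c u = e1 * ?c c * ?c y1" "?c (1 - u) = e2 * ?c c * ?c y2"
    using Leg_P0[OF assms(1,2) f1 f2] by blast
  define i1 where "i1 = modular_inverse ?P y1"
  define i2 where "i2 = modular_inverse ?P y2"
  have ci1: "[i1 * y1 = 1] (mod ?P)" unfolding i1_def
    using cong_modular_inverse2 cop_of_ndvd assms(1,4) by blast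
  have ci2: "[i2 * y2 = 1] (mod ?P)" unfolding i2_def
    using cong_modular_inverse2 cop_of_ndvd assms(1,5) by blast
  have li1: "?c i1 = ?c y1" unfolding i1_def using Leg_inv[OF assms(1) p2 assms(4)] .
  have li2: "?c i2 = ?c y2" unfolding i2_def using Leg_inv[OF assms(1) p2 assms(5)] .
  show ?thesis
  proof (intro exI conjI)
    show "?c (c * u * i1) = e1"
      using LM u li1 cc assms(6) by auto
    show "?c (c * (1 - u) * i2) = e2"
      using LM u li2 cc assms(7) by auto
    have "[c * u * (i1 * y1) + c * (1 - u) * (i2 * y2) = c * u * 1 + c * (1 - u) * 1] (mod ?P)"
      using ci1 ci2 by (intro cong_add cong_mult cong_refl)
    thus "[c * u * i1 * y1 + c * (1 - u) * i2 * y2 = c] (mod ?P)"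
      by (simp add: algebra_simps)
  qed
qed

lemma sum_mod_support:
  fixes x w :: "'a \<Rightarrow> int"
  assumes "finite I" "S = {i\<in>I. \<not> P dvd x i}"
  shows "[(\<Sum>i\<in>I. w i * x i) = (\<Sum>i\<in>S. w i * x i)] (mod P)"
proof -
  have "S \<subseteq> I" using assms by auto
  hence "(\<Sum>i\<in>I. w i * x i) = (\<Sum>i\<in>I - S. w i * x i) + (\<Sum>i\<in>S. w i * x i)"
    using sum.subset_diff assms(1) by blast
  moreover have "P dvd (\<Sum>i\<in>I - S. w i * x i)"
    using assms by (intro dvd_sum) auto
  ultimately show ?thesis by (simp add: cong_iff_dvd_diff)
qed

lemma W:
  fixes x e :: "'a \<Rightarrow> int"
  assumes "prime p" "7 \<le> p" "finite I" "S = {i\<in>I. \<not> int p dvd x i}" "card S \<noteq> 1"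
    "\<forall>i\<in>I. e i \<in> {-1,1}"
    "card S = 2 \<longrightarrow> (\<Prod>i\<in>S. e i) = Legendre (- (\<Prod>i\<in>S. x i)) (int p)"
  shows "\<exists>w. (\<forall>i\<in>I. Legendre (w i) (int p) = e i) \<and> [(\<Sum>i\<in>I. w i * x i) = 0] (mod int p)"
proof -
  let ?P = "int p"
  let ?c = "\<lambda>u. Legendre u ?P"
  have p2: "2 < p" using assms by simp
  note LM = Leg_mult[OF assms(1) p2]
  have finS: "finite S" using assms(3,4) by simp
  have SI: "S \<subseteq> I" using assms(4) by auto
  have ndS: "\<not> ?P dvd x i" if "i \<in> S" for i using that assms(4) by auto
  define r where "r i = (SOME r. ?c r = e i)" for i
  have r: "?c (r i) = e i" if "i \<in> I" for i
    unfolding r_def using someI_ex[OF Leg_realize[OF assms(1) p2 assms(6)[rule_format, OF that]]] .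
  have rnd: "\<not> ?P dvd r i" if "i \<in> I" for i
    using r[OF that] assms(6) that Leg_zero_iff[of "r i" ?P] by force
  have red: "\<exists>w. (\<forall>i\<in>I. ?c (w i) = e i) \<and> [(\<Sum>i\<in>S. w i * x i) = 0] (mod ?P)"
  proof (cases "card S = 0")
    case True
    hence "S = {}" using finS by simp
    thus ?thesis using r by (intro exI[of _ r]) auto
  next
    case False
    hence c2: "card S \<ge> 2" using assms(5) by simp
    then obtain u where u: "u \<in> S" using finS by (metis card.empty ex_in_conv not_numeral_le_zero)
    have "card (S - {u}) \<ge> 1" using c2 u finS by simp
    then obtain v where v: "v \<in> S - {u}" by (metis card.empty ex_in_conv not_one_le_zero)
    have uv: "u \<in> S" "v \<in> S" "u \<noteq> v" using u v by auto
    define R where "R = S - {u,v}"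
    have SR: "S = insert u (insert v R)" "u \<notin> R" "v \<notin> R" "finite R" using uv finS unfolding R_def by auto
    have cardS: "card S = card R + 2" using SR uv(3) by simp
    have sumS: "(\<Sum>i\<in>S. w i * x i) = w u * x u + w v * x v + (\<Sum>i\<in>R. w i * x i)" for w
      using SR uv(3) by (simp add: algebra_simps)
    show ?thesis
    proof (cases "card S = 2")
      case True
      hence "R = {}" using cardS SR(4) by simp
      hence S2: "S = {u,v}" using SR by simp
      define iv where "iv = modular_inverse ?P (x v)"
      have civ: "[iv * x v = 1] (mod ?P)" unfolding iv_def
        using cong_modular_inverse2 cop_of_ndvd assms(1) ndS[OF uv(2)] by blast
      have liv: "?c iv = ?c (x v)" unfolding iv_def using Leg_inv[OF assms(1) p2 ndS[OF uv(2)]] .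
      define w where "w = r(v := - r u * x u * iv)"
      have ev: "e u * e v = ?c (- (x u * x v))" using assms(7) True S2 uv(3) by simp
      have eu: "e u \<in> {-1,1}" using assms(6) uv SI by auto
      have "?c (w v) = e v"
      proof -
        have "w v = (- x u * r u) * iv" unfolding w_def by simp
        hence "?c (w v) = ?c ((- x u * r u) * iv)" by (simp only:)
        also have "\<dots> = ?c (- x u) * ?c (r u) * ?c iv" by (simp only: LM)
        finally have "?c (w v) = ?c (- x u) * ?c (r u) * ?c (x v)" using liv by simp
        moreover have "?c (- (x u * x v)) = ?c (- x u) * ?c (x v)" using LM[of "- x u" "x v"] by simp
        ultimately have "?c (w v) = (e u * e v) * e u" using ev r[of u] uv SI by auto
        thus ?thesis using eu by auto
      qed
      hence wc: "\<forall>i\<in>I. ?c (w i) = e i" using r unfolding w_def by auto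
      have "[w u * x u + w v * x v = r u * x u - r u * x u * 1] (mod ?P)"
      proof -
        have "w u * x u + w v * x v = r u * x u - r u * x u * (iv * x v)"
          unfolding w_def using uv(3) by (simp add: algebra_simps)
        moreover have "[r u * x u - r u * x u * (iv * x v) = r u * x u - r u * x u * 1] (mod ?P)"
          using civ by (intro cong_diff cong_mult cong_refl)
        ultimately show ?thesis by simp
      qed
      hence "[(\<Sum>i\<in>S. w i * x i) = 0] (mod ?P)" using sumS[of w] \<open>R = {}\<close> by simp
      thus ?thesis using wc by blast
    next
      case False
      hence "R \<noteq> {}" using cardS by auto
      then obtain t where t: "t \<in> R" by blast
      have tI: "t \<in> I" using t SR SI by auto
      define c0 where "c0 = - (\<Sum>i\<in>R. r i * x i)"
      define r' where "r' = (if ?P dvd c0 then r(t := 4 * r t) else r)"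
      have r'c: "?c (r' i) = e i" if "i \<in> I" for i
      proof -
        have n2: "\<not> ?P dvd 2" using assms(2) by (auto dest: zdvd_imp_le)
        have "?c (4 * r t) = ?c (r t)"
          using n2 LM[of 2 2] LM[of 4 "r t"] Leg_sq[OF assms(1) p2, of 2] assms(2) by simp
        thus ?thesis unfolding r'_def using r that tI by auto
      qed
      define c where "c = - (\<Sum>i\<in>R. r' i * x i)"
      have ndc: "\<not> ?P dvd c"
      proof (cases "?P dvd c0")
        case False
        thus ?thesis unfolding c_def r'_def c0_def by simp
      next
        case True
        have "(\<Sum>i\<in>R. r' i * x i) = (\<Sum>i\<in>R. r i * x i) + 3 * r t * x t"
        proof -
          have "(\<Sum>i\<in>R. r' i * x i) = r' t * x t + (\<Sum>i\<in>R - {t}. r' i * x i)"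
            using sum.remove[OF SR(4) t] by blast
          also have "(\<Sum>i\<in>R - {t}. r' i * x i) = (\<Sum>i\<in>R - {t}. r i * x i)"
            unfolding r'_def by (intro sum.cong) auto
          also have "(\<Sum>i\<in>R. r i * x i) = r t * x t + (\<Sum>i\<in>R - {t}. r i * x i)"
            using sum.remove[OF SR(4) t] by blast
          ultimately show ?thesis unfolding r'_def using True by simp
        qed
        hence cc: "c = c0 - 3 * r t * x t" unfolding c_def c0_def by simp
        have "\<not> ?P dvd 3 * r t * x t"
        proof
          assume "?P dvd 3 * r t * x t"
          moreover have "prime ?P" using assms(1) by simp
          ultimately have "?P dvd 3 \<or> ?P dvd r t \<or> ?P dvd x t"
            by (simp add: prime_dvd_mult_iff)
          moreover have "\<not> ?P dvd 3" using assms(2) by (auto dest: zdvd_imp_le)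
          ultimately show False using rnd[OF tI] ndS t SR by auto
        qed
        moreover have "?P dvd c \<Longrightarrow> ?P dvd c0 - c" using True by (rule dvd_diff)
        ultimately show ?thesis using cc by auto
      qed
      have eu: "e u \<in> {-1,1}" "e v \<in> {-1,1}" using assms(6) uv SI by auto
      obtain w1 w2 where w12: "?c w1 = e u" "?c w2 = e v" "[w1 * x u + w2 * x v = c] (mod ?P)"
        using Leg_two[OF assms(1,2) ndc ndS[OF uv(1)] ndS[OF uv(2)] eu] by blast
      define w where "w = r'(u := w1, v := w2)"
      have wc: "\<forall>i\<in>I. ?c (w i) = e i" unfolding w_def using r'c w12 uv(3) by auto
      have "(\<Sum>i\<in>R. w i * x i) = (\<Sum>i\<in>R. r' i * x i)"
        unfolding w_def using SR by (intro sum.cong) auto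
      hence "(\<Sum>i\<in>S. w i * x i) = w1 * x u + w2 * x v - c"
        using sumS[of w] uv(3) unfolding w_def c_def by simp
      moreover have "[w1 * x u + w2 * x v - c = c - c] (mod ?P)"
        using w12(3) by (intro cong_diff cong_refl)
      ultimately have "[(\<Sum>i\<in>S. w i * x i) = 0] (mod ?P)" by simp
      thus ?thesis using wc by auto
    qed
  qed
  then obtain w where w: "\<forall>i\<in>I. ?c (w i) = e i" "[(\<Sum>i\<in>S. w i * x i) = 0] (mod ?P)" by blast
  have "[(\<Sum>i\<in>I. w i * x i) = (\<Sum>i\<in>S. w i * x i)] (mod ?P)"
    using sum_mod_support[OF assms(3,4)] .
  thus ?thesis using w cong_trans by blast
qed


lemma prod_pm1: "(\<forall>i\<in>A. f i \<in> {-1,1::int}) \<Longrightarrow> prod f A \<in> {-1,1}"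
  by (induction A rule: infinite_finite_induct) auto

lemma card2_eq: "card A = 2 \<Longrightarrow> a \<in> A \<Longrightarrow> b \<in> A \<Longrightarrow> a \<noteq> b \<Longrightarrow> A = {a,b}"
  by (auto simp: card_2_iff)

lemma core:
  fixes P :: "nat set" and p' :: nat and I :: "nat set" and x :: "nat \<Rightarrow> int"
  assumes finP: "finite P" and Pp: "\<forall>p\<in>P. prime p \<and> 7 \<le> p" and p'P: "p' \<in> P" and finI: "finite I"
    and nz: "\<forall>p\<in>P. card {i\<in>I. \<not> int p dvd x i} \<noteq> 1"
    and good: "\<not> (\<exists>u v. u \<noteq> v \<and> P - {p'} \<noteq> {} \<and> (\<forall>q\<in>P-{p'}. {i\<in>I. \<not> int q dvd x i} = {u,v})
                 \<and> (\<Prod>q\<in>P-{p'}. Legendre (-(x u * x v)) (int q)) = -1)"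
  shows "\<exists>w. (\<forall>p\<in>P. \<forall>i\<in>I. Legendre (w p i) (int p) \<in> {-1,1})
           \<and> (\<forall>p\<in>P. [(\<Sum>i\<in>I. w p i * x i) = 0] (mod int p))
           \<and> (\<forall>i\<in>I. (\<Prod>q\<in>P-{p'}. Legendre (w q i) (int q)) = 1)"
proof -
  define Q where "Q = P - {p'}"
  define S where "S q = {i\<in>I. \<not> int q dvd x i}" for q
  define nr where "nr i q \<longleftrightarrow> q \<in> Q \<and> \<not> (i \<in> S q \<and> card (S q) = 2)" for i q
  define rigid where "rigid i \<longleftrightarrow> \<not> (\<exists>q. nr i q)" for i
  define head where "head q = (if \<exists>j\<in>S q. \<not> rigid j then (SOME j. j \<in> S q \<and> \<not> rigid j) else Max (S q))" for q
  define sg where "sg q = Legendre (-(\<Prod>i\<in>S q. x i)) (int q)" for q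
  define base where "base q i = (if card (S q) = 2 \<and> i = head q then sg q else 1)" for q i
  define slack where "slack i = (SOME q. nr i q)" for i
  define eps where "eps q i = (if \<not> rigid i \<and> q = slack i then (\<Prod>q'\<in>Q-{slack i}. base q' i) else base q i)" for q i
  have finS: "finite (S q)" for q unfolding S_def using finI by simp
  have finQ: "finite Q" unfolding Q_def using finP by simp
  have QP: "Q \<subseteq> P" unfolding Q_def by auto
  have sg_pm: "sg q \<in> {-1,1}" if "q \<in> P" for q
  proof -
    have pq: "prime (int q)" using Pp that by simp
    have "\<not> int q dvd (\<Prod>i\<in>S q. x i)"
      using prime_dvd_prod_iff[OF finS pq] unfolding S_def by auto
    hence "\<not> int q dvd (-(\<Prod>i\<in>S q. x i))" by simp
    thus ?thesis unfolding sg_def using Leg_pm1 by blast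
  qed
  have base_pm: "base q i \<in> {-1,1}" if "q \<in> P" for q i
    unfolding base_def using sg_pm[OF that] by auto
  have eps_pm: "eps q i \<in> {-1,1}" if "q \<in> P" for q i
  proof -
    have "(\<Prod>q'\<in>Q-{slack i}. base q' i) \<in> {-1,1}"
      using base_pm QP by (intro prod_pm1) auto
    thus ?thesis unfolding eps_def using base_pm[OF that] by auto
  qed
  have slack: "nr i (slack i)" if "\<not> rigid i" for i
    using that unfolding rigid_def slack_def by (metis someI_ex)
  have head_in: "head q \<in> S q" if "S q \<noteq> {}" for q
  proof (cases "\<exists>j\<in>S q. \<not> rigid j")
    case True
    hence "\<exists>j. j \<in> S q \<and> \<not> rigid j" by blast
    from someI_ex[OF this] show ?thesis unfolding head_def using True by simp
  next
    case False
    thus ?thesis unfolding head_def using Max_in[OF finS that] by simp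
  qed
  have eps_base: "eps p i = base p i" if "i \<in> S p" "card (S p) = 2" for p i
  proof -
    have "\<not> (\<not> rigid i \<and> p = slack i)"
      using slack[of i] that unfolding nr_def by auto
    thus ?thesis unfolding eps_def by auto
  qed
  have F3: "card (S p) = 2 \<longrightarrow> (\<Prod>i\<in>S p. eps p i) = sg p" for p
  proof
    assume c2: "card (S p) = 2"
    hence ne: "S p \<noteq> {}" by auto
    have "(\<Prod>i\<in>S p. eps p i) = (\<Prod>i\<in>S p. if i = head p then sg p else 1)"
      using eps_base c2 unfolding base_def by (intro prod.cong) auto
    also have "\<dots> = sg p" using prod.delta[OF finS, of "head p" "\<lambda>_. sg p"] head_in[OF ne] by simp
    finally show "(\<Prod>i\<in>S p. eps p i) = sg p" .
  qed
  have perprime: "\<exists>w. (\<forall>i\<in>I. Legendre (w i) (int p) = eps p i) \<and> [(\<Sum>i\<in>I. w i * x i) = 0] (mod int p)"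
    if "p \<in> P" for p
  proof (rule W)
    show "prime p" "7 \<le> p" using Pp that by auto
    show "finite I" by (rule finI)
    show "S p = {i\<in>I. \<not> int p dvd x i}" unfolding S_def ..
    show "card (S p) \<noteq> 1" using nz that unfolding S_def by auto
    show "\<forall>i\<in>I. eps p i \<in> {-1,1}" using eps_pm[OF that] by auto
    show "card (S p) = 2 \<longrightarrow> (\<Prod>i\<in>S p. eps p i) = Legendre (- (\<Prod>i\<in>S p. x i)) (int p)"
      using F3 unfolding sg_def by simp
  qed
  hence "\<forall>p\<in>P. \<exists>w. (\<forall>i\<in>I. Legendre (w i) (int p) = eps p i) \<and> [(\<Sum>i\<in>I. w i * x i) = 0] (mod int p)"
    by blast
  from bchoice[OF this] obtain w where w: "\<forall>p\<in>P. (\<forall>i\<in>I. Legendre (w p i) (int p) = eps p i) \<and> [(\<Sum>i\<in>I. w p i * x i) = 0] (mod int p)"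
    by blast
  have F4: "(\<Prod>q\<in>Q. eps q i) = 1" if "i \<in> I" for i
  proof (cases "rigid i")
    case False
    let ?s = "slack i"
    have sQ: "?s \<in> Q" using slack[OF False] unfolding nr_def by auto
    have "(\<Prod>q\<in>Q. eps q i) = eps ?s i * (\<Prod>q\<in>Q-{?s}. eps q i)"
      using prod.remove[OF finQ sQ] by blast
    also have "(\<Prod>q\<in>Q-{?s}. eps q i) = (\<Prod>q\<in>Q-{?s}. base q i)"
      unfolding eps_def by (intro prod.cong) auto
    also have "eps ?s i = (\<Prod>q\<in>Q-{?s}. base q i)" unfolding eps_def using False by simp
    finally have e: "(\<Prod>q\<in>Q. eps q i) = (\<Prod>q\<in>Q-{?s}. base q i) * (\<Prod>q\<in>Q-{?s}. base q i)" .
    have "(\<Prod>q\<in>Q-{?s}. base q i) \<in> {-1,1}" using base_pm QP by (intro prod_pm1) auto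
    thus ?thesis using e by auto
  next
    case True
    have rq: "i \<in> S q \<and> card (S q) = 2" if "q \<in> Q" for q
      using True that unfolding rigid_def nr_def by auto
    have "(\<Prod>q\<in>Q. eps q i) = (\<Prod>q\<in>Q. base q i)"
      unfolding eps_def using True by simp
    also have "\<dots> = 1"
    proof (cases "\<exists>q\<in>Q. base q i \<noteq> 1")
      case False
      thus ?thesis by simp
    next
      case True
      then obtain q where q: "q \<in> Q" "base q i \<noteq> 1" by blast
      have hq: "head q = i" "card (S q) = 2" using q unfolding base_def by (auto split: if_splits)
      have allr: "\<forall>j\<in>S q. rigid j"
      proof (rule ccontr)
        assume "\<not> (\<forall>j\<in>S q. rigid j)"
        hence ex: "\<exists>j\<in>S q. \<not> rigid j" by blast
        hence "\<exists>j. j \<in> S q \<and> \<not> rigid j" by blast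
        from someI_ex[OF this] have "\<not> rigid (head q)" unfolding head_def using ex by simp
        thus False using hq \<open>rigid i\<close> by simp
      qed
      obtain a b where ab: "S q = {a,b}" "a \<noteq> b" using hq(2) unfolding card_2_iff by blast
      hence "\<exists>j. j \<in> S q \<and> j \<noteq> i" by auto
      then obtain j where j: "j \<in> S q" "j \<noteq> i" by blast
      have rj: "rigid j" using allr j by blast
      have Seq: "S q' = {i,j}" if "q' \<in> Q" for q'
      proof -
        have "i \<in> S q'" "card (S q') = 2" using rq[OF that] by auto
        moreover have "j \<in> S q'" using rj that unfolding rigid_def nr_def by auto
        ultimately show ?thesis using card2_eq j(2) by metis
      qed
      have Sqij: "S q = {i,j}" using Seq q(1) .
      have headeq: "head q' = i" if "q' \<in> Q" for q'
      proof -
        have "\<not> (\<exists>j'\<in>S q'. \<not> rigid j')" using Seq[OF that] \<open>rigid i\<close> rj by auto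
        hence "head q' = Max (S q')" unfolding head_def by simp
        also have "\<dots> = Max (S q)" using Seq[OF that] Sqij by simp
        also have "\<dots> = head q" unfolding head_def using allr by auto
        finally show ?thesis using hq by simp
      qed
      have "(\<Prod>q'\<in>Q. base q' i) = (\<Prod>q'\<in>Q. Legendre (-(x i * x j)) (int q'))"
      proof (rule prod.cong[OF refl])
        fix q' assume q': "q' \<in> Q"
        have "base q' i = sg q'" unfolding base_def using headeq[OF q'] rq[OF q'] by simp
        also have "\<dots> = Legendre (-(x i * x j)) (int q')" unfolding sg_def using Seq[OF q'] j(2) by simp
        finally show "base q' i = Legendre (-(x i * x j)) (int q')" .
      qed
      moreover have "(\<Prod>q'\<in>Q. Legendre (-(x i * x j)) (int q')) \<noteq> -1"
      proof
        assume pm: "(\<Prod>q'\<in>Q. Legendre (-(x i * x j)) (int q')) = -1"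
        have c1: "P - {p'} \<noteq> {}" using q(1) unfolding Q_def by auto
        have c2: "\<forall>q\<in>P-{p'}. {i\<in>I. \<not> int q dvd x i} = {i,j}"
          using Seq unfolding Q_def S_def by simp
        have "i \<noteq> j \<and> P - {p'} \<noteq> {} \<and> (\<forall>q\<in>P-{p'}. {i'\<in>I. \<not> int q dvd x i'} = {i,j})
                 \<and> (\<Prod>q\<in>P-{p'}. Legendre (-(x i * x j)) (int q)) = -1"
          using j(2) c1 c2 pm unfolding Q_def by simp
        thus False using good by blast
      qed
      moreover have "(\<Prod>q'\<in>Q. base q' i) \<in> {-1,1}" using base_pm QP by (intro prod_pm1) auto
      ultimately show ?thesis by auto
    qed
    finally show ?thesis .
  qed
  show ?thesis
  proof (intro exI[of _ w] conjI ballI)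
    fix p i assume "p \<in> P" "i \<in> I"
    thus "Legendre (w p i) (int p) \<in> {-1,1}" using w eps_pm by auto
  next
    fix p assume "p \<in> P"
    thus "[(\<Sum>i\<in>I. w p i * x i) = 0] (mod int p)" using w by auto
  next
    fix i assume i: "i \<in> I"
    have "(\<Prod>q\<in>P-{p'}. Legendre (w q i) (int q)) = (\<Prod>q\<in>Q. eps q i)"
      unfolding Q_def using w i by (intro prod.cong) auto
    thus "(\<Prod>q\<in>P-{p'}. Legendre (w q i) (int q)) = 1" using F4[OF i] by simp
  qed
qed


lemma comb:
  fixes Z :: "'j \<Rightarrow> 'e set"
  assumes "finite J" "finite E" "card J < card E"
  shows "\<exists>I\<subseteq>E. I \<noteq> {} \<and> (\<forall>j\<in>J. card (I \<inter> Z j) \<noteq> 1) \<and> card (E - I) \<le> card {j\<in>J. I \<inter> Z j = {}}"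
  using assms
proof (induction "card J" arbitrary: J E rule: less_induct)
  case less
  show ?case
  proof (cases "\<forall>j\<in>J. card (E \<inter> Z j) \<noteq> 1")
    case True
    have "E \<noteq> {}" using less.prems by auto
    thus ?thesis using True by (intro exI[of _ E]) auto
  next
    case False
    then obtain j0 where j0: "j0 \<in> J" "card (E \<inter> Z j0) = 1" by blast
    obtain e where e: "E \<inter> Z j0 = {e}" using card_1_singletonE[OF j0(2)] by blast
    have eE: "e \<in> E" using e by auto
    define J' where "J' = J - {j0}"
    define E' where "E' = E - {e}"
    have cJ': "card J' = card J - 1" unfolding J'_def using j0 less.prems by simp
    have cE': "card E' = card E - 1" unfolding E'_def using eE less.prems by simp
    have "card J > 0" using j0(1) less.prems(1) card_gt_0_iff by blast
    hence lt: "card J' < card J" using cJ' by linarith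
    have fJ': "finite J'" and fE': "finite E'" using less.prems unfolding J'_def E'_def by auto
    have ltE: "card J' < card E'" using cJ' cE' less.prems lt by linarith
    have IH: "\<exists>I\<subseteq>E'. I \<noteq> {} \<and> (\<forall>j\<in>J'. card (I \<inter> Z j) \<noteq> 1) \<and> card (E' - I) \<le> card {j\<in>J'. I \<inter> Z j = {}}"
      using less.hyps[OF lt fJ' fE' ltE] .
    then obtain I where I: "I \<subseteq> E'" "I \<noteq> {}" "\<forall>j\<in>J'. card (I \<inter> Z j) \<noteq> 1"
        "card (E' - I) \<le> card {j\<in>J'. I \<inter> Z j = {}}" by blast
    have Ij0: "I \<inter> Z j0 = {}" using I(1) e unfolding E'_def by auto
    have IE: "I \<subseteq> E" using I(1) unfolding E'_def by auto
    have "E - I = insert e (E' - I)" using eE I(1) unfolding E'_def by auto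
    hence c1: "card (E - I) = card (E' - I) + 1"
      using less.prems I(1) unfolding E'_def by (simp add: card_insert_if)
    have "{j\<in>J. I \<inter> Z j = {}} = insert j0 {j\<in>J'. I \<inter> Z j = {}}"
      using Ij0 j0 unfolding J'_def by auto
    hence c2: "card {j\<in>J. I \<inter> Z j = {}} = card {j\<in>J'. I \<inter> Z j = {}} + 1"
      using less.prems unfolding J'_def by (simp add: card_insert_if)
    show ?thesis
    proof (intro exI[of _ I] conjI IE I(2) ballI)
      fix j assume "j \<in> J"
      thus "card (I \<inter> Z j) \<noteq> 1" using I(3) Ij0 unfolding J'_def by (cases "j = j0") auto
    next
      show "card (E - I) \<le> card {j\<in>J. I \<inter> Z j = {}}" using c1 c2 I(4) by simp
    qed
  qed
qed

definition badI :: "nat set \<Rightarrow> nat \<Rightarrow> (nat \<Rightarrow> int) \<Rightarrow> nat set \<Rightarrow> bool" where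
  "badI P p' x I \<longleftrightarrow> (\<exists>u v. u \<noteq> v \<and> P - {p'} \<noteq> {} \<and> (\<forall>q\<in>P-{p'}. {i\<in>I. \<not> int q dvd x i} = {u,v})
                 \<and> (\<Prod>q\<in>P-{p'}. Legendre (-(x u * x v)) (int q)) = -1)"

lemma select:
  fixes P :: "nat set" and x :: "nat \<Rightarrow> int"
  assumes "finite P" "p' \<in> P" "card P = k" "k \<noteq> 2"
  shows "\<exists>I\<subseteq>{..<k+1}. I \<noteq> {} \<and> (\<forall>p\<in>P. card {i\<in>I. \<not> int p dvd x i} \<noteq> 1) \<and> \<not> badI P p' x I"
proof -
  define Z where "Z p = {i. \<not> int p dvd x i}" for p
  have ZI: "{i\<in>J. \<not> int p dvd x i} = J \<inter> Z p" for J p unfolding Z_def by auto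
  obtain I where I: "I \<subseteq> {..<k+1}" "I \<noteq> {}" "\<forall>j\<in>P. card (I \<inter> Z j) \<noteq> 1"
      "card ({..<k+1} - I) \<le> card {j\<in>P. I \<inter> Z j = {}}"
    using comb[of P "{..<k+1}" Z] assms(1,3) by auto
  show ?thesis
  proof (cases "badI P p' x I")
    case False
    have "\<forall>p\<in>P. card {i\<in>I. \<not> int p dvd x i} \<noteq> 1" using I(3) by (simp only: ZI)
    thus ?thesis using I(1,2) False by blast
  next
    case True
    then obtain u v where uv: "u \<noteq> v" "P - {p'} \<noteq> {}" "\<forall>q\<in>P-{p'}. {i\<in>I. \<not> int q dvd x i} = {u,v}"
      unfolding badI_def by blast
    hence uv: "u \<noteq> v" "P - {p'} \<noteq> {}" "\<forall>q\<in>P-{p'}. I \<inter> Z q = {u,v}" by (simp_all only: ZI not_False_eq_True)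
    obtain q0 where q0: "q0 \<in> P - {p'}" using uv(2) by blast
    have uvI: "u \<in> I" "v \<in> I" using uv(3) q0 by auto
    have "card (P - {p'}) \<ge> 1" using uv(2) assms(1) by (simp add: Suc_le_eq card_gt_0_iff)
    hence k3: "k \<ge> 3" using assms by simp
    have sub: "{j\<in>P. I \<inter> Z j = {}} \<subseteq> {p'}" using uv(3) by auto
    hence "card {j\<in>P. I \<inter> Z j = {}} \<le> 1" using card_mono[OF _ sub] by simp
    hence cEI: "card ({..<k+1} - I) \<le> 1" using I(4) by simp
    have "card I \<le> k + 1" using card_mono[OF _ I(1)] by simp
    hence cI: "card I = k + 1 - card ({..<k+1} - I)"
      using I(1) card_Diff_subset[OF finite_subset[OF I(1)] I(1)] by simp
    define I' where "I' = I - {u,v}"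
    have cI': "card I' = card I - 2" unfolding I'_def using uvI uv(1) finite_subset[OF I(1)] by simp
    have I'Q: "I' \<inter> Z q = {}" if "q \<in> P - {p'}" for q using uv(3) that unfolding I'_def by auto
    have I'sub: "I' \<subseteq> {..<k+1}" using I(1) unfolding I'_def by auto
    have notbad: "\<not> badI P p' x J" if J0: "\<forall>q\<in>P-{p'}. J \<inter> Z q = {}" for J
    proof
      assume "badI P p' x J"
      then obtain u' v' where "\<forall>q\<in>P-{p'}. {i\<in>J. \<not> int q dvd x i} = {u',v'}"
        unfolding badI_def by blast
      hence "J \<inter> Z q0 = {u',v'}" using q0 ZI by simp
      thus False using J0 q0 by simp
    qed
    show ?thesis
    proof (cases "card (I' \<inter> Z p') = 1")
      case False
      have "card I' \<ge> 1" using cI' cI cEI k3 by arith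
      hence "I' \<noteq> {}" by auto
      moreover have "\<forall>p\<in>P. card (I' \<inter> Z p) \<noteq> 1"
      proof
        fix p assume pP: "p \<in> P"
        show "card (I' \<inter> Z p) \<noteq> 1"
        proof (cases "p = p'")
          case True thus ?thesis using False by simp
        next
          case False thus ?thesis using I'Q pP by simp
        qed
      qed
      ultimately show ?thesis using I'sub notbad[of I'] I'Q ZI by (intro exI[of _ I']) auto
    next
      case True
      obtain w where w: "I' \<inter> Z p' = {w}" using card_1_singletonE[OF True] by blast
      hence "I \<inter> Z p' \<noteq> {}" unfolding I'_def by auto
      hence e0: "{j\<in>P. I \<inter> Z j = {}} = {}" using sub by auto
      have c0: "card ({..<k+1} - I) = 0" using I(4) unfolding e0 card.empty by linarith
      have "card I = k + 1" using cI by (simp only: c0 diff_zero)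
      hence "card I' \<ge> 2" using cI' k3 by simp
      define I'' where "I'' = I' - {w}"
      have wI': "w \<in> I'" using w by auto
      have "card I'' = card I' - 1" unfolding I''_def using wI' by (simp add: card_Diff_singleton_if)
      hence "card I'' \<ge> 1" using \<open>card I' \<ge> 2\<close> by linarith
      hence ne: "I'' \<noteq> {}" by auto
      have I''Z: "I'' \<inter> Z p = {}" if "p \<in> P" for p
        using that w I'Q unfolding I''_def by (cases "p = p'") auto
      have I''sub: "I'' \<subseteq> {..<k+1}" using I'sub unfolding I''_def by auto
      have c1: "\<forall>p\<in>P. card {i\<in>I''. \<not> int p dvd x i} \<noteq> 1" using I''Z ZI by simp
      have nb: "\<not> badI P p' x I''" using notbad[of I''] I''Z by blast
      show ?thesis using ne I''sub c1 nb by blast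
    qed
  qed
qed


lemma sqf_mult1:
  assumes "squarefree (n::nat)" "p \<in> prime_factors n"
  shows "multiplicity p n = 1"
proof -
  have "n \<noteq> 0" using assms(1) not_squarefree_0 by metis
  thus ?thesis using squarefree_factorial_semiring'[of n] assms by auto
qed

lemma bigOmega_sqf:
  assumes "squarefree (n::nat)"
  shows "bigOmega n = card (prime_factors n)"
proof -
  have "prime_factorization n = mset_set (prime_factors n)"
  proof (rule multiset_eqI)
    fix p
    show "count (prime_factorization n) p = count (mset_set (prime_factors n)) p"
    proof (cases "p \<in> prime_factors n")
      case True
      thus ?thesis using sqf_mult1[OF assms True] by (simp add: count_prime_factorization in_prime_factors_imp_prime)
    next
      case False
      thus ?thesis by (simp add: count_eq_zero_iff)
    qed
  qed
  thus ?thesis unfolding bigOmega_def by (metis size_mset_set)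
qed

lemma n_prod:
  assumes "squarefree (n::nat)"
  shows "n = \<Prod>(prime_factors n)"
proof -
  have "n \<noteq> 0" using assms not_squarefree_0 by metis
  hence "(\<Prod>p \<in> prime_factors n. p ^ multiplicity p n) = n" using prod_prime_factors[of n] by simp
  moreover have "(\<Prod>p \<in> prime_factors n. p ^ multiplicity p n) = \<Prod>(prime_factors n)"
    using sqf_mult1[OF assms] by (intro prod.cong) auto
  ultimately show ?thesis by simp
qed

lemma Jacobi_sqf:
  assumes "squarefree (n::nat)"
  shows "Jacobi a n = (\<Prod>p\<in>prime_factors n. Legendre a (int p))"
  unfolding Jacobi_def using sqf_mult1[OF assms] by (intro prod.cong) auto

lemma prod_primes_dvd:
  assumes "finite A" "\<forall>p\<in>A. prime (p::nat)" "\<forall>p\<in>A. int p dvd s"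
  shows "int (\<Prod>A) dvd s"
  using assms
proof (induction A rule: finite_induct)
  case empty thus ?case by simp
next
  case (insert a F)
  have "coprime a (\<Prod>F)"
  proof (rule prod_coprime_right)
    fix b assume "b \<in> F"
    hence "a \<noteq> b" "prime a" "prime b" using insert by auto
    thus "coprime a b" using primes_coprime[of a b] by blast
  qed
  hence "coprime (int a) (int (\<Prod>F))" by (simp only: coprime_int_iff)
  moreover have "int a dvd s" "int (\<Prod>F) dvd s" using insert by auto
  ultimately have "int a * int (\<Prod>F) dvd s" using divides_mult by blast
  thus ?case using insert by simp
qed


lemma dvd_div_other:
  assumes "prime p" "prime q" "p \<noteq> q" "p dvd n" "q dvd (n::nat)"
  shows "p dvd n div q"
proof -
  have "n = q * (n div q)" using assms(5) by simp
  hence "p dvd q * (n div q)" using assms(4) by metis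
  moreover have "\<not> p dvd q" using primes_dvd_imp_eq assms(1,2,3) by blast
  ultimately show ?thesis using assms(1) prime_dvd_mult_iff by blast
qed

theorem theorem3p7:
  fixes n p' :: nat
  assumes "odd n"
    and "squarefree n"
    and "\<forall>p. prime p \<and> p dvd n \<longrightarrow> p \<ge> 7"
    and "bigOmega n \<noteq> 2"
    and "prime p'" and "p' dvd n"
  shows "DA (Lset n p') n = bigOmega n + 1"
proof -
  define P where "P = prime_factors n"
  define k where "k = bigOmega n"
  have n0: "n \<noteq> 0" using assms(2) not_squarefree_0 by metis
  have kP: "card P = k" using bigOmega_sqf[OF assms(2)] unfolding k_def P_def by simp
  have finP: "finite P" unfolding P_def by simp
  have Pprime: "\<forall>p\<in>P. prime p \<and> 7 \<le> p \<and> p dvd n"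
    using assms(3) n0 unfolding P_def by (auto simp: in_prime_factors_iff)
  have Pprime': "\<forall>p\<in>P. prime p \<and> 7 \<le> p" using Pprime by blast
  have p'P: "p' \<in> P" using assms(5,6) n0 unfolding P_def by (simp add: in_prime_factors_iff)
  have k2: "k \<noteq> 2" using assms(4) unfolding k_def .
  have jac: "Jacobi a n = (\<Prod>p\<in>P. Legendre a (int p))" for a
    using Jacobi_sqf[OF assms(2)] unfolding P_def .
  have nprod: "n = \<Prod>P" using n_prod[OF assms(2)] unfolding P_def .
  have dvdn: "int n dvd s" if "\<forall>p\<in>P. int p dvd s" for s
  proof -
    have "int (\<Prod>P) dvd s" using prod_primes_dvd[OF finP] Pprime that by blast
    thus ?thesis using nprod by simp
  qed
  have up: "\<forall>x. (\<forall>i<k+1. x i \<in> Zn n) \<longrightarrow> has_A_zero_sum_subseq n (Lset n p') (k+1) x"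
  proof (intro allI impI)
    fix x :: "nat \<Rightarrow> int"
    obtain I where I: "I \<subseteq> {..<k+1}" "I \<noteq> {}" "\<forall>p\<in>P. card {i\<in>I. \<not> int p dvd x i} \<noteq> 1"
        "\<not> badI P p' x I"
      using select[OF finP p'P kP k2] by blast
    have finI: "finite I" using I(1) finite_subset by blast
    have gd: "\<not> (\<exists>u v. u \<noteq> v \<and> P - {p'} \<noteq> {} \<and> (\<forall>q\<in>P-{p'}. {i\<in>I. \<not> int q dvd x i} = {u,v})
               \<and> (\<Prod>q\<in>P-{p'}. Legendre (-(x u * x v)) (int q)) = -1)"
      using I(4) unfolding badI_def .
    obtain w where w: "\<forall>p\<in>P. \<forall>i\<in>I. Legendre (w p i) (int p) \<in> {-1,1}"
        "\<forall>p\<in>P. [(\<Sum>i\<in>I. w p i * x i) = 0] (mod int p)"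
        "\<forall>i\<in>I. (\<Prod>q\<in>P-{p'}. Legendre (w q i) (int q)) = 1"
      using core[OF finP Pprime' p'P finI I(3) gd] by blast
    have crt: "\<exists>c. \<forall>p\<in>P. [c = nat (w p i mod int p)] (mod p)" for i
    proof -
      have "\<forall>a\<in>P. \<forall>b\<in>P. a \<noteq> b \<longrightarrow> coprime (id a) (id b)"
      proof (intro ballI impI)
        fix a b assume ab: "a \<in> P" "b \<in> P" "a \<noteq> b"
        have pa: "prime a" using Pprime ab(1) by blast
        have pb: "prime b" using Pprime ab(2) by blast
        show "coprime (id a) (id b)" using primes_coprime[OF pa pb ab(3)] by (simp only: id_apply)
      qed
      from chinese_remainder_nat[OF finP this, of "\<lambda>p. nat (w p i mod int p)"]
      show ?thesis by simp
    qed
    hence "\<forall>i. \<exists>c. \<forall>p\<in>P. [c = nat (w p i mod int p)] (mod p)" by blast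
    from choice[OF this] obtain c where c: "\<forall>i. \<forall>p\<in>P. [c i = nat (w p i mod int p)] (mod p)" by blast
    define a where "a i = int (c i mod n)" for i
    have acong: "[a i = w p i] (mod int p)" if pP: "p \<in> P" for p i
    proof -
      have pn: "p dvd n" "p > 0" using Pprime pP prime_gt_0_nat by auto
      have "[c i mod n = c i] (mod p)" unfolding cong_def using mod_mod_cancel[OF pn(1)] by simp
      hence 1: "[a i = int (c i)] (mod int p)" unfolding a_def using cong_int_iff by blast
      have "[c i = nat (w p i mod int p)] (mod p)" using c pP by blast
      hence 2: "[int (c i) = int (nat (w p i mod int p))] (mod int p)" using cong_int_iff by blast
      have 3: "int (nat (w p i mod int p)) = w p i mod int p" using pn(2) by simp
      have 4: "[w p i mod int p = w p i] (mod int p)" by (simp add: cong_def)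
      have 5: "[int (c i) = w p i mod int p] (mod int p)" using 2 unfolding 3 .
      show ?thesis using cong_trans[OF cong_trans[OF 1 5] 4] .
    qed
    have aleg: "Legendre (a i) (int p) = Legendre (w p i) (int p)" if "p \<in> P" for p i
      using Leg_cong[OF acong[OF that]] .
    show "has_A_zero_sum_subseq n (Lset n p') (k+1) x"
      unfolding has_A_zero_sum_subseq_def
    proof (intro exI[of _ I] exI[of _ a] conjI I(1) I(2) ballI)
      fix i assume i: "i \<in> I"
      have nd: "\<not> int p dvd a i" if "p \<in> P" for p
        using w(1) that i aleg[OF that, of i] Leg_zero_iff[of "a i" "int p"] by force
      have inZ: "a i \<in> Zn n" unfolding Zn_def a_def using n0 by simp
      have "coprime (a i) (\<Prod>p\<in>P. int p)"
        using nd cop_of_ndvd Pprime by (intro prod_coprime_right) blast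
      moreover have "int n = (\<Prod>p\<in>P. int p)" by (subst nprod) simp
      ultimately have cop: "coprime (a i) (int n)" by simp
      have "Jacobi (a i) n = Legendre (a i) (int p') * (\<Prod>q\<in>P-{p'}. Legendre (a i) (int q))"
        unfolding jac using prod.remove[OF finP p'P] by blast
      also have "(\<Prod>q\<in>P-{p'}. Legendre (a i) (int q)) = (\<Prod>q\<in>P-{p'}. Legendre (w q i) (int q))"
        using aleg by (intro prod.cong) auto
      also have "\<dots> = 1" using w(3) i by blast
      finally have "Jacobi (a i) n = Legendre (a i) (int p')" by simp
      thus "a i \<in> Lset n p'" unfolding Lset_def units_mod_def using inZ cop by simp
    next
      have "int p dvd (\<Sum>i\<in>I. a i * x i)" if pP: "p \<in> P" for p
      proof -
        have "[(\<Sum>i\<in>I. a i * x i) = (\<Sum>i\<in>I. w p i * x i)] (mod int p)"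
          using acong[OF pP] by (intro cong_sum cong_mult cong_refl) auto
        hence "[(\<Sum>i\<in>I. a i * x i) = 0] (mod int p)" using w(2) pP cong_trans by blast
        thus ?thesis by (simp add: cong_0_iff)
      qed
      hence "int n dvd (\<Sum>i\<in>I. a i * x i)" using dvdn by blast
      thus "[(\<Sum>i\<in>I. a i * x i) = 0] (mod int n)" by (simp add: cong_0_iff)
    qed
  qed
  have low: "\<not> (\<forall>x. (\<forall>i<m. x i \<in> Zn n) \<longrightarrow> has_A_zero_sum_subseq n (Lset n p') m x)" if mk: "m \<le> k" for m
  proof
    assume H: "\<forall>x. (\<forall>i<m. x i \<in> Zn n) \<longrightarrow> has_A_zero_sum_subseq n (Lset n p') m x"
    obtain h where h: "bij_betw h {0..<card P} P" using ex_bij_betw_nat_finite[OF finP] by blast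
    have hP: "h i \<in> P" if "i < k" for i
    proof -
      have "i \<in> {0..<card P}" using that kP by simp
      thus ?thesis using bij_betwE[OF h] by blast
    qed
    have inj: "inj_on h {0..<card P}" using h unfolding bij_betw_def by blast
    define x where "x i = int (n div h i)" for i
    have "\<forall>i<m. x i \<in> Zn n"
    proof (intro allI impI)
      fix i assume "i < m"
      hence "h i \<in> P" using hP mk by simp
      hence "h i > 1" using Pprime by auto
      hence "n div h i < n" using n0 by simp
      thus "x i \<in> Zn n" unfolding x_def Zn_def by simp
    qed
    hence "has_A_zero_sum_subseq n (Lset n p') m x" using H[rule_format] by blast
    then obtain I a where Ia: "I \<subseteq> {..<m}" "I \<noteq> {}" "\<forall>i\<in>I. a i \<in> Lset n p'"
        "[(\<Sum>i\<in>I. a i * x i) = 0] (mod int n)"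
      unfolding has_A_zero_sum_subseq_def by blast
    obtain j where j: "j \<in> I" using Ia(2) by blast
    define p where "p = h j"
    have jk: "j < k" using Ia(1) j mk by auto
    have pP: "p \<in> P" unfolding p_def using hP jk .
    have pr: "prime p" "p dvd n" using Pprime pP by auto
    have finI: "finite I" using Ia(1) finite_subset by blast
    have "int n dvd (\<Sum>i\<in>I. a i * x i)" using Ia(4) by (simp add: cong_0_iff)
    moreover have "int p dvd int n" using pr(2) by simp
    ultimately have ps: "int p dvd (\<Sum>i\<in>I. a i * x i)" using dvd_trans by blast
    have others: "int p dvd (\<Sum>i\<in>I-{j}. a i * x i)"
    proof (intro dvd_sum)
      fix i assume i: "i \<in> I - {j}"
      have ik: "i < k" using Ia(1) i mk by auto
      have "h i \<noteq> h j"
      proof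
        assume "h i = h j"
        hence "i = j" using inj_onD[OF inj] ik jk kP by simp
        thus False using i by simp
      qed
      moreover have pi: "prime (h i)" "h i dvd n" using Pprime hP[OF ik] by blast+
      moreover have pj: "prime (h j)" "h j dvd n" using Pprime hP[OF jk] by blast+
      ultimately have "p dvd n div h i" unfolding p_def using dvd_div_other[of "h j" "h i" n] by auto
      hence "int p dvd x i" unfolding x_def by (simp add: of_nat_dvd_iff)
      thus "int p dvd a i * x i" by simp
    qed
    have "(\<Sum>i\<in>I. a i * x i) = a j * x j + (\<Sum>i\<in>I-{j}. a i * x i)"
      using sum.remove[OF finI j] by blast
    hence "a j * x j = (\<Sum>i\<in>I. a i * x i) - (\<Sum>i\<in>I-{j}. a i * x i)" by simp
    moreover have "int p dvd (\<Sum>i\<in>I. a i * x i) - (\<Sum>i\<in>I-{j}. a i * x i)"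
      using ps others by (rule dvd_diff)
    ultimately have "int p dvd a j * x j" by simp
    hence "int p dvd a j \<or> int p dvd x j" using pr(1) by (simp add: prime_dvd_mult_iff)
    moreover have "\<not> int p dvd a j"
    proof
      assume "int p dvd a j"
      moreover have "coprime (a j) (int n)" using Ia(3) j unfolding Lset_def units_mod_def by auto
      moreover have "int p dvd int n" using pr(2) by simp
      ultimately have "is_unit (int p)" using coprime_common_divisor by blast
      thus False using pr(1) by simp
    qed
    moreover have "\<not> int p dvd x j"
    proof
      assume "int p dvd x j"
      hence d: "p dvd n div p" unfolding x_def p_def by simp
      have "n = p * (n div p)" using pr(2) by simp
      moreover have "p * p dvd p * (n div p)" using mult_dvd_mono[OF dvd_refl d] .
      ultimately have "p * p dvd n" by simp
      hence "p ^ 2 dvd n" by (simp add: power2_eq_square)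
      hence "p dvd 1" using squarefreeD[OF assms(2)] by blast
      thus False using pr(1) by simp
    qed
    ultimately show False by blast
  qed
  have "(LEAST m. \<forall>x. (\<forall>i<m. x i \<in> Zn n) \<longrightarrow> has_A_zero_sum_subseq n (Lset n p') m x) = k + 1"
  proof (rule Least_equality)
    show "\<forall>x. (\<forall>i<k+1. x i \<in> Zn n) \<longrightarrow> has_A_zero_sum_subseq n (Lset n p') (k+1) x" using up .
  next
    fix m assume "\<forall>x. (\<forall>i<m. x i \<in> Zn n) \<longrightarrow> has_A_zero_sum_subseq n (Lset n p') m x"
    show "k + 1 \<le> m"
    proof (rule ccontr)
      assume "\<not> k + 1 \<le> m"
      hence "m \<le> k" by simp
      thus False using low \<open>\<forall>x. (\<forall>i<m. x i \<in> Zn n) \<longrightarrow> has_A_zero_sum_subseq n (Lset n p') m x\<close> by blast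
    qed
  qed
  thus ?thesis unfolding DA_def k_def .
qed


end
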